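(* For every integer $k\ge2$ there exist a set $V$ with $|V|=k^2$ and a partial orientation $o$ on $V$ such that: (i) among any four distinct elements of $V$ some three $x,y,z$ satisfy $o(xyz)=0$; (ii) for all distinct $A,B,C,D\in V$, $o(ABD)=o(BCD)=o(CAD)=1$ implies $o(ABC)=1$; (iii) for all distinct $A,B,C,D\in V$, if $o(ABC)=o(ABD)=0$, $o(ACD)\ne0$ and $o(BCD)\ne0$, then $o(ACD)=o(BCD)$; and (iv) the largest subset $S\subseteq V$ such that $o(xyz)=0$ for all distinct $x,y,z\in S$ has exactly $2k-1$ elements.
   Context: A partial orientation on $V$ is a map $o$ from ordered triples of distinct elements of $V$ to $\{+1,0,-1\}$ with $o(uvw)=o(wuv)=o(vwu)=-o(uwv)=-o(vuw)=-o(wvu)$. *)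

theory Defs
  imports Main
begin

text \<open>Values outside triples of distinct elements of V are irrelevant.\<close>
definition partial_orientation :: "'a set \<Rightarrow> ('a \<Rightarrow> 'a \<Rightarrow> 'a \<Rightarrow> int) \<Rightarrow> bool" where
  "partial_orientation V ori \<longleftrightarrow>
     (\<forall>u\<in>V. \<forall>v\<in>V. \<forall>w\<in>V. distinct [u, v, w] \<longrightarrow>
        ori u v w \<in> {-1, 0, 1} \<and>
        ori u v w = ori w u v \<and> ori u v w = ori v w u \<and>
        ori u v w = - ori u w v \<and> ori u v w = - ori v u w \<and> ori u v w = - ori w v u)"

definition zero_subset :: "'a set \<Rightarrow> ('a \<Rightarrow> 'a \<Rightarrow> 'a \<Rightarrow> int) \<Rightarrow> 'a set \<Rightarrow> bool" where
  "zero_subset V ori S \<longleftrightarrow>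
     S \<subseteq> V \<and> (\<forall>x\<in>S. \<forall>y\<in>S. \<forall>z\<in>S. distinct [x, y, z] \<longrightarrow> ori x y z = 0)"

end

theory Submission
  imports Defs
begin
definition btw :: "nat\<Rightarrow>nat\<Rightarrow>nat\<Rightarrow>bool" where "btw a b c \<longleftrightarrow> (b<a \<and> a<c) \<or> (c<a \<and> a<b)"
definition edge :: "(nat\<Rightarrow>nat)\<Rightarrow>nat\<Rightarrow>nat\<Rightarrow>nat\<Rightarrow>bool" where
 "edge f x y z \<longleftrightarrow> (x<y \<and> x<z \<and> btw (f x) (f y) (f z)) \<or> (y<x \<and> y<z \<and> btw (f y) (f x) (f z)) \<or> (z<x \<and> z<y \<and> btw (f z) (f x) (f y))"
definition cyc :: "nat\<Rightarrow>nat\<Rightarrow>nat\<Rightarrow>int" where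
 "cyc x y z = (if (x<y\<and>y<z)\<or>(y<z\<and>z<x)\<or>(z<x\<and>x<y) then 1 else -1)"
definition orn :: "(nat\<Rightarrow>nat)\<Rightarrow>nat\<Rightarrow>nat\<Rightarrow>nat\<Rightarrow>int" where
 "orn f x y z = (if edge f x y z then cyc (f x) (f y) (f z) else 0)"

lemma btw_sym: "btw a b c = btw a c b" unfolding btw_def by auto
lemma edge_min: "x<y \<Longrightarrow> x<z \<Longrightarrow> edge f x y z \<longleftrightarrow> btw (f x) (f y) (f z)"
  unfolding edge_def by auto
lemma edge_s1: "edge f x y z = edge f y x z" unfolding edge_def by (metis btw_sym)
lemma edge_s2: "edge f x y z = edge f x z y" unfolding edge_def by (metis btw_sym)
lemma cyc_s1: "distinct [x,y,z] \<Longrightarrow> cyc x y z = - cyc y x z" unfolding cyc_def by auto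
lemma cyc_s2: "distinct [x,y,z] \<Longrightarrow> cyc x y z = - cyc x z y" unfolding cyc_def by auto
lemma orn_s1: "distinct [f x,f y,f z] \<Longrightarrow> orn f x y z = - orn f y x z"
  unfolding orn_def using edge_s1[of f x y z] cyc_s1[of "f x" "f y" "f z"] by simp
lemma orn_s2: "distinct [f x,f y,f z] \<Longrightarrow> orn f x y z = - orn f x z y"
  unfolding orn_def using edge_s2[of f x y z] cyc_s2[of "f x" "f y" "f z"] by simp
lemma orn_vals: "orn f x y z \<in> {-1,0,1}" unfolding orn_def cyc_def by auto

lemma po: assumes "distinct [f x,f y,f z]" shows "orn f x y z \<in> {-1,0,1} \<and>
        orn f x y z = orn f z x y \<and> orn f x y z = orn f y z x \<and>
        orn f x y z = - orn f x z y \<and> orn f x y z = - orn f y x z \<and> orn f x y z = - orn f z y x"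
proof -
  have d: "distinct [f x,f z,f y]" "distinct [f z,f x,f y]" "distinct [f y,f x,f z]" "distinct [f y,f z,f x]" using assms by auto
  have 1: "orn f x y z = - orn f y x z" using orn_s1 assms by blast
  have 2: "orn f x y z = - orn f x z y" using orn_s2 assms by blast
  have 3: "orn f x z y = - orn f z x y" using orn_s1 d by blast
  have 4: "orn f y x z = - orn f y z x" using orn_s2 d by blast
  have 5: "orn f z x y = - orn f z y x" using orn_s2 d by blast
  show ?thesis using 1 2 3 4 5 orn_vals by simp
qed

lemma orn_ne0: "orn f x y z \<noteq> 0 \<longleftrightarrow> edge f x y z"
  unfolding orn_def cyc_def by auto

lemma no3: "btw v p q \<Longrightarrow> btw v p r \<Longrightarrow> btw v q r \<Longrightarrow> False"
  unfolding btw_def by auto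

lemma k4m: "a<b \<Longrightarrow> a<c \<Longrightarrow> a<d \<Longrightarrow>
  edge f a b c \<Longrightarrow> edge f a b d \<Longrightarrow> edge f a c d \<Longrightarrow> False"
  using edge_min[of a b c f] edge_min[of a b d f] edge_min[of a c d f] no3 by blast

lemma k4: assumes "distinct [a,b,c,d]"
  "edge f a b c" "edge f a b d" "edge f a c d" "edge f b c d" shows False
proof -
  have "(a<b \<and> a<c \<and> a<d) \<or> (b<a \<and> b<c \<and> b<d) \<or> (c<a \<and> c<b \<and> c<d) \<or> (d<a \<and> d<b \<and> d<c)"
    using assms(1) by auto
  moreover have "\<not> (a<b \<and> a<c \<and> a<d)" using k4m[of a b c d f] assms by blast
  moreover have "\<not> (b<a \<and> b<c \<and> b<d)" using k4m[of b a c d f] assms edge_s1 by metis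
  moreover have "\<not> (c<a \<and> c<b \<and> c<d)" using k4m[of c a b d f] assms edge_s1 edge_s2 by metis
  moreover have "\<not> (d<a \<and> d<b \<and> d<c)" using k4m[of d a b c f] assms edge_s1 edge_s2 by metis
  ultimately show False by blast
qed

lemma ii: "distinct [f A,f B,f C,f D] \<Longrightarrow> orn f A B D = 1 \<Longrightarrow> orn f B C D = 1 \<Longrightarrow> orn f C A D = 1 \<Longrightarrow> False"
  unfolding orn_def cyc_def by (auto split: if_splits)

lemma iii_core: assumes "distinct [A,B,C,D]"
  "edge f A C D" "edge f B C D" "\<not> edge f A B C" "\<not> edge f A B D"
  and vA: "f C < f A" "f A < f D" and vB: "f B < f C \<or> f D < f B" and ab: "f A \<noteq> f B" shows False
proof -
  have "(A<B \<and> A<C \<and> A<D) \<or> (B<A \<and> B<C \<and> B<D) \<or> (C<A \<and> C<B \<and> C<D) \<or> (D<A \<and> D<B \<and> D<C)"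
    using assms(1) by auto
  moreover have "\<not> (A<B \<and> A<C \<and> A<D)"
  proof
    assume h: "A<B \<and> A<C \<and> A<D"
    have "\<not> btw (f A) (f B) (f C)" "\<not> btw (f A) (f B) (f D)" using h edge_min assms by metis+
    then show False using vA ab unfolding btw_def by auto
  qed
  moreover have "\<not> (B<A \<and> B<C \<and> B<D)"
  proof
    assume h: "B<A \<and> B<C \<and> B<D"
    have "btw (f B) (f C) (f D)" using h edge_min assms by metis
    then show False using vA vB unfolding btw_def by auto
  qed
  moreover have "\<not> (C<A \<and> C<B \<and> C<D)"
  proof
    assume h: "C<A \<and> C<B \<and> C<D"
    have "edge f C A D" using assms edge_s1 by metis
    then have "btw (f C) (f A) (f D)" using h edge_min by metis
    then show False using vA unfolding btw_def by auto
  qed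
  moreover have "\<not> (D<A \<and> D<B \<and> D<C)"
  proof
    assume h: "D<A \<and> D<B \<and> D<C"
    have "edge f D A C" using assms edge_s1 edge_s2 by metis
    then have "btw (f D) (f A) (f C)" using h edge_min by metis
    then show False using vA unfolding btw_def by auto
  qed
  ultimately show False by blast
qed

lemma iii_core2: assumes "distinct [A,B,C,D]" "distinct [f A, f B, f C, f D]" "f C < f D"
  "edge f A C D" "edge f B C D" "\<not> edge f A B C" "\<not> edge f A B D"
  shows "(f C < f A \<and> f A < f D) = (f C < f B \<and> f B < f D)"
proof -
  have d2: "distinct [B,A,C,D]" using assms(1) by auto
  have n: "\<not> edge f B A C" "\<not> edge f B A D" using assms edge_s1 by metis+
  show ?thesis
  proof
    assume "f C < f A \<and> f A < f D"
    then show "f C < f B \<and> f B < f D" using iii_core[OF assms(1) assms(4-7)] assms(2) by fastforce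
  next
    assume "f C < f B \<and> f B < f D"
    then show "f C < f A \<and> f A < f D" using iii_core[OF d2 assms(5) assms(4) n] assms(2) by fastforce
  qed
qed

lemma iii: assumes "distinct [A,B,C,D]" "distinct [f A, f B, f C, f D]"
  "orn f A B C = 0" "orn f A B D = 0" "orn f A C D \<noteq> 0" "orn f B C D \<noteq> 0" shows "orn f A C D = orn f B C D"
proof -
  have e: "\<not> edge f A B C" "\<not> edge f A B D" "edge f A C D" "edge f B C D"
    using assms orn_ne0 by blast+
  show ?thesis
  proof (cases "f C < f D")
    case True
    then have "(f C < f A \<and> f A < f D) = (f C < f B \<and> f B < f D)" using iii_core2 assms(1,2) e by blast
    then show ?thesis using e True assms(2) unfolding orn_def cyc_def by auto
  next
    case False
    then have "f D < f C" using assms(2) by auto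
    have d2: "distinct [A,B,D,C]" "distinct [f A, f B, f D, f C]" using assms(1,2) by auto
    have "edge f A D C" "edge f B D C" using e edge_s2 by metis+
    then have "(f D < f A \<and> f A < f C) = (f D < f B \<and> f B < f C)" using iii_core2[OF d2 \<open>f D < f C\<close>] e by blast
    then show ?thesis using e \<open>f D < f C\<close> assms(2) unfolding orn_def cyc_def by auto
  qed
qed
definition pk :: "nat \<Rightarrow> nat \<Rightarrow> nat" where "pk k p = p div k * k + (k - 1 - p mod k)"

lemma pk_div: "0<k \<Longrightarrow> pk k p div k = p div k"
  unfolding pk_def by simp
lemma pk_mod: "0<k \<Longrightarrow> pk k p mod k = k - 1 - p mod k"
  unfolding pk_def by simp
lemma pk_inj: assumes "0<k" "pk k p = pk k q" shows "p = q"
proof -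
  have "p div k = q div k" using pk_div[OF assms(1)] assms(2) by metis
  have "k - 1 - p mod k = k - 1 - q mod k" using pk_mod[OF assms(1)] assms(2) by metis
  moreover have "p mod k < k" "q mod k < k" using assms(1) by auto
  ultimately have "p mod k = q mod k" by arith
  then show ?thesis using \<open>p div k = q div k\<close> by (metis div_mult_mod_eq)
qed
lemma pk_same: assumes "0<k" "p div k = q div k" "p<q" shows "pk k q < pk k p"
proof -
  have "p mod k < q mod k" using assms by (metis div_mult_mod_eq nat_add_left_cancel_less)
  moreover have "q mod k < k" using assms(1) by simp
  ultimately show ?thesis unfolding pk_def using assms(2) by simp
qed
lemma pk_lt: assumes "0<k" "p div k < q div k" shows "pk k p < pk k q"
proof -
  have "pk k p < p div k * k + k" unfolding pk_def using assms(1) by simp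
  also have "\<dots> = Suc (p div k) * k" by simp
  also have "\<dots> \<le> q div k * k" using assms(2) by (meson Suc_leI mult_le_mono1)
  also have "\<dots> \<le> pk k q" unfolding pk_def by simp
  finally show ?thesis .
qed

lemma noedge: assumes "\<And>x y. x\<in>S \<Longrightarrow> y\<in>S \<Longrightarrow> x<y \<Longrightarrow> (f x < f y \<longleftrightarrow> g x)"
  "x\<in>S" "y\<in>S" "z\<in>S" shows "\<not> edge f x y z"
proof -
  have h: "\<not> (a<b \<and> a<c \<and> btw (f a) (f b) (f c))" if "a\<in>S" "b\<in>S" "c\<in>S" for a b c
    using assms(1)[OF that(1,2)] assms(1)[OF that(1,3)] unfolding btw_def by auto
  show ?thesis unfolding edge_def using h assms(2-4) by blast
qed

lemma ub: assumes k: "0<k" and SV: "S \<subseteq> {..<k^2}"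
  and z: "\<forall>x\<in>S. \<forall>y\<in>S. \<forall>z\<in>S. distinct [x,y,z] \<longrightarrow> \<not> edge (pk k) x y z"
  shows "card S \<le> 2*k-1"
proof (cases "S = {}")
  case True then show ?thesis by simp
next
  case False
  define f where "f = pk k"
  have fin: "finite S" using SV finite_subset by blast
  have finj: "\<And>x y. x \<noteq> y \<Longrightarrow> f x \<noteq> f y" unfolding f_def using pk_inj k by blast
  have dich: "(\<forall>y\<in>S. x<y \<longrightarrow> f x < f y) \<or> (\<forall>y\<in>S. x<y \<longrightarrow> f y < f x)" if xS: "x\<in>S" for x
  proof (rule ccontr)
    assume "\<not> ?thesis"
    then obtain y w where yw: "y\<in>S" "x<y" "\<not> f x < f y" "w\<in>S" "x<w" "\<not> f w < f x" by blast
    have "f y \<noteq> f x" "f w \<noteq> f x" using finj yw(2,5) by auto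
    then have "f y < f x" "f x < f w" using yw(3,6) by auto
    then have "y \<noteq> w" by auto
    then have "distinct [x,y,w]" using yw by auto
    moreover have "edge f x y w" using edge_min[of x y w f] yw \<open>f y < f x\<close> \<open>f x < f w\<close> unfolding btw_def by auto
    ultimately show False using z xS yw unfolding f_def by blast
  qed
  define M where "M = Max S"
  have MS: "M \<in> S" and Mmax: "\<And>y. y\<in>S \<Longrightarrow> y \<le> M" using fin False M_def by auto
  define U where "U = {x\<in>S. x\<noteq>M \<and> (\<forall>y\<in>S. x<y \<longrightarrow> f x < f y)}"
  define W where "W = {x\<in>S. x\<noteq>M \<and> (\<forall>y\<in>S. x<y \<longrightarrow> f y < f x)}"
  have sub: "S \<subseteq> insert M (U \<union> W)" using dich unfolding U_def W_def by blast
  have finU: "finite U" "finite W" using fin unfolding U_def W_def by auto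
  have cU: "card (insert M U) \<le> k"
  proof -
    have ne: "x div k \<noteq> y div k" if "x \<in> insert M U" "y \<in> insert M U" "x<y" for x y
    proof
      assume eq: "x div k = y div k"
      have yS: "y \<in> S" using that MS unfolding U_def by auto
      have "x \<noteq> M" using Mmax[OF yS] that by auto
      then have "x \<in> U" using that by auto
      then have "f x < f y" using yS that unfolding U_def by auto
      moreover have "f y < f x" using pk_same[OF k eq that(3)] unfolding f_def .
      ultimately show False by auto
    qed
    have inj: "inj_on (\<lambda>x. x div k) (insert M U)"
    proof (rule inj_onI)
      fix x y assume xy: "x \<in> insert M U" "y \<in> insert M U" "x div k = y div k"
      show "x = y"
      proof (rule ccontr)
        assume "x \<noteq> y" then have "x<y \<or> y<x" by auto
        then show False using ne[of x y] ne[of y x] xy by auto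
      qed
    qed
    have img: "(\<lambda>x. x div k) ` (insert M U) \<subseteq> {..<k}"
    proof
      fix v assume "v \<in> (\<lambda>x. x div k) ` (insert M U)"
      then obtain x where x: "x \<in> insert M U" "v = x div k" by blast
      have "insert M U \<subseteq> S" using MS unfolding U_def by blast
      then have "x < k^2" using SV x(1) by blast
      then have "x < k*k" by (simp add: power2_eq_square)
      then have "x div k < k" by (rule less_mult_imp_div_less)
      then show "v \<in> {..<k}" using x(2) by simp
    qed
    have "card (insert M U) \<le> card {..<k}" by (rule card_inj_on_le[OF inj img finite_lessThan])
    then show ?thesis by simp
  qed
  have cW: "card (insert M W) \<le> k"
  proof -
    have ne: "x mod k \<noteq> y mod k" if "x \<in> insert M W" "y \<in> insert M W" "x<y" for x y
    proof
      assume eq: "x mod k = y mod k"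
      have yS: "y \<in> S" using that MS unfolding W_def by auto
      have "x \<noteq> M" using Mmax[OF yS] that by auto
      then have "x \<in> W" using that by auto
      then have "f y < f x" using yS that unfolding W_def by auto
      moreover have "x div k < y div k"
      proof (rule ccontr)
        assume "\<not> x div k < y div k"
        then have "y div k * k \<le> x div k * k" by simp
        then have "y \<le> x" using eq div_mult_mod_eq[of y k] div_mult_mod_eq[of x k] by linarith
        then show False using that(3) by simp
      qed
      then have "f x < f y" using pk_lt[OF k] unfolding f_def by blast
      ultimately show False by auto
    qed
    have inj: "inj_on (\<lambda>x. x mod k) (insert M W)"
    proof (rule inj_onI)
      fix x y assume xy: "x \<in> insert M W" "y \<in> insert M W" "x mod k = y mod k"
      show "x = y"
      proof (rule ccontr)
        assume "x \<noteq> y" then have "x<y \<or> y<x" by auto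
        then show False using ne[of x y] ne[of y x] xy by auto
      qed
    qed
    have img: "(\<lambda>x. x mod k) ` (insert M W) \<subseteq> {..<k}" using k by auto
    have "card (insert M W) \<le> card {..<k}" by (rule card_inj_on_le[OF inj img finite_lessThan])
    then show ?thesis by simp
  qed
  have "M \<notin> U" "M \<notin> W" unfolding U_def W_def by auto
  then have "Suc (card U) \<le> k" "Suc (card W) \<le> k" using cU cW finU by auto
  moreover have "card S \<le> Suc (card U + card W)"
  proof -
    have "card S \<le> card (insert M (U \<union> W))" using sub finU by (intro card_mono) auto
    also have "\<dots> \<le> Suc (card (U \<union> W))" by (simp add: card_insert_le_m1)
    also have "\<dots> \<le> Suc (card U + card W)" using card_Un_le by simp
    finally show ?thesis .
  qed
  ultimately show ?thesis by linarith
qed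

lemma divk: "0<k \<Longrightarrow> j<k \<Longrightarrow> (m*k + j) div k = (m::nat)" by simp

lemma ex_S: assumes k2: "k \<ge> 2"
  shows "\<exists>S. S \<subseteq> {..<k^2} \<and> card S = 2*k-1 \<and> (\<forall>x\<in>S. \<forall>y\<in>S. \<forall>z\<in>S. \<not> edge (pk k) x y z)"
proof -
  have k: "0<k" using k2 by simp
  define A where "A = (\<lambda>i. i*k) ` {..<k-1}"
  define B where "B = (\<lambda>j. (k-1)*k + j) ` {..<k}"
  have Alt: "x < (k-1)*k" if "x\<in>A" for x
    using that k unfolding A_def by auto
  have Bge: "(k-1)*k \<le> x" if "x\<in>B" for x
    using that unfolding B_def by auto
  have Adiv: "x div k < k-1" if "x\<in>A" for x
    using that k unfolding A_def by auto
  have Bdiv: "x div k = k-1" if xB: "x\<in>B" for x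
  proof -
    obtain j where "j<k" "x = (k-1)*k + j" using xB unfolding B_def by blast
    then show ?thesis using divk[OF k] by simp
  qed
  have key: "pk k x < pk k y \<longleftrightarrow> x < (k-1)*k" if "x \<in> A \<union> B" "y \<in> A \<union> B" "x<y" for x y
  proof (cases "x\<in>A")
    case True
    have "x div k < y div k"
    proof (cases "y\<in>A")
      case True
      then obtain i i' where "x = i*k" "y = i'*k" using \<open>x\<in>A\<close> unfolding A_def by auto
      then show ?thesis using k \<open>x<y\<close> by simp
    next
      case False
      then have "y\<in>B" using that by auto
      then show ?thesis using Bdiv Adiv True by simp
    qed
    then show ?thesis using pk_lt[OF k] Alt True by blast
  next
    case False
    then have xB: "x\<in>B" using that by auto
    have "y \<notin> A" using Alt Bge xB \<open>x<y\<close> by fastforce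
    then have "y\<in>B" using that by auto
    then have "pk k y < pk k x" using pk_same[OF k _ \<open>x<y\<close>] Bdiv xB by simp
    then show ?thesis using Bge[OF xB] by simp
  qed
  have ne: "\<forall>x\<in>A\<union>B. \<forall>y\<in>A\<union>B. \<forall>z\<in>A\<union>B. \<not> edge (pk k) x y z"
    using noedge[of "A \<union> B" "pk k" "\<lambda>x. x < (k-1)*k"] key by blast
  have sub: "A \<union> B \<subseteq> {..<k^2}"
  proof
    fix x assume "x \<in> A \<union> B"
    then show "x \<in> {..<k^2}"
    proof
      assume "x\<in>A"
      then have "x < (k-1)*k" by (rule Alt)
      also have "\<dots> \<le> k*k" by simp
      finally show ?thesis by (simp add: power2_eq_square)
    next
      assume "x\<in>B"
      then obtain j where "j<k" "x = (k-1)*k + j" unfolding B_def by auto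
      then have "x < (k-1)*k + k" by simp
      also have "\<dots> = k*k" using k by (metis Suc_diff_1 mult_Suc add.commute)
      finally show ?thesis by (simp add: power2_eq_square)
    qed
  qed
  have cA: "card A = k-1"
  proof -
    have "inj_on (\<lambda>i. i*k) {..<k-1}" using k unfolding inj_on_def by simp
    then show ?thesis unfolding A_def by (simp add: card_image)
  qed
  have cB: "card B = k"
  proof -
    have "inj_on (\<lambda>j. (k-1)*k + j) {..<k}" unfolding inj_on_def by simp
    then show ?thesis unfolding B_def by (simp add: card_image)
  qed
  have disj: "A \<inter> B = {}" using Alt Bge by fastforce
  have "card (A \<union> B) = k - 1 + k"
    using card_Un_disjoint[of A B] disj cA cB unfolding A_def B_def by simp
  then have "card (A \<union> B) = 2*k-1" using k by simp
  then show ?thesis using sub ne by blast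
qed

theorem claim7:
  fixes k :: nat
  assumes "k \<ge> 2"
  shows "\<exists>(V :: nat set) ori. finite V \<and> card V = k ^ 2 \<and> partial_orientation V ori \<and>
    (\<forall>a\<in>V. \<forall>b\<in>V. \<forall>c\<in>V. \<forall>d\<in>V. distinct [a, b, c, d] \<longrightarrow>
       (\<exists>x\<in>{a, b, c, d}. \<exists>y\<in>{a, b, c, d}. \<exists>z\<in>{a, b, c, d}. distinct [x, y, z] \<and> ori x y z = 0)) \<and>
    (\<forall>A\<in>V. \<forall>B\<in>V. \<forall>C\<in>V. \<forall>D\<in>V. distinct [A, B, C, D] \<longrightarrow>
       ori A B D = 1 \<and> ori B C D = 1 \<and> ori C A D = 1 \<longrightarrow> ori A B C = 1) \<and>
    (\<forall>A\<in>V. \<forall>B\<in>V. \<forall>C\<in>V. \<forall>D\<in>V. distinct [A, B, C, D] \<longrightarrow>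
       ori A B C = 0 \<and> ori A B D = 0 \<and> ori A C D \<noteq> 0 \<and> ori B C D \<noteq> 0 \<longrightarrow> ori A C D = ori B C D) \<and>
    (\<exists>S. zero_subset V ori S \<and> card S = 2 * k - 1) \<and>
    (\<forall>S. zero_subset V ori S \<longrightarrow> card S \<le> 2 * k - 1)"
proof -
  have k: "0<k" using assms by simp
  define f where "f = pk k"
  have finj: "\<And>x y. x \<noteq> y \<Longrightarrow> f x \<noteq> f y" unfolding f_def using pk_inj k by blast
  have d3: "distinct [f x, f y, f z]" if "distinct [x,y,z]" for x y z using that finj by auto
  have d4: "distinct [f a, f b, f c, f d]" if "distinct [a,b,c,d]" for a b c d using that finj by auto
  let ?V = "{..<k^2}"
  let ?o = "orn f"
  have P0: "finite ?V \<and> card ?V = k^2" by simp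
  have P1: "partial_orientation ?V ?o"
    unfolding partial_orientation_def using po d3 by blast
  have P2: "\<forall>a\<in>?V. \<forall>b\<in>?V. \<forall>c\<in>?V. \<forall>d\<in>?V. distinct [a, b, c, d] \<longrightarrow>
       (\<exists>x\<in>{a, b, c, d}. \<exists>y\<in>{a, b, c, d}. \<exists>z\<in>{a, b, c, d}. distinct [x, y, z] \<and> ?o x y z = 0)"
  proof (intro ballI impI)
    fix a b c d :: nat assume dd: "distinct [a,b,c,d]"
    have "\<not> (edge f a b c \<and> edge f a b d \<and> edge f a c d \<and> edge f b c d)" using k4 dd by blast
    then have "?o a b c = 0 \<or> ?o a b d = 0 \<or> ?o a c d = 0 \<or> ?o b c d = 0" using orn_ne0 by blast
    moreover have "distinct [a,b,c]" "distinct [a,b,d]" "distinct [a,c,d]" "distinct [b,c,d]" using dd by auto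
    ultimately show "\<exists>x\<in>{a, b, c, d}. \<exists>y\<in>{a, b, c, d}. \<exists>z\<in>{a, b, c, d}. distinct [x, y, z] \<and> ?o x y z = 0"
      by blast
  qed
  have P3: "\<forall>A\<in>?V. \<forall>B\<in>?V. \<forall>C\<in>?V. \<forall>D\<in>?V. distinct [A, B, C, D] \<longrightarrow>
       ?o A B D = 1 \<and> ?o B C D = 1 \<and> ?o C A D = 1 \<longrightarrow> ?o A B C = 1"
    using ii d4 by blast
  have P4: "\<forall>A\<in>?V. \<forall>B\<in>?V. \<forall>C\<in>?V. \<forall>D\<in>?V. distinct [A, B, C, D] \<longrightarrow>
       ?o A B C = 0 \<and> ?o A B D = 0 \<and> ?o A C D \<noteq> 0 \<and> ?o B C D \<noteq> 0 \<longrightarrow> ?o A C D = ?o B C D"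
    using iii d4 by blast
  have P5: "\<exists>S. zero_subset ?V ?o S \<and> card S = 2 * k - 1"
  proof -
    obtain S where S: "S \<subseteq> ?V" "card S = 2*k-1" "\<forall>x\<in>S. \<forall>y\<in>S. \<forall>z\<in>S. \<not> edge f x y z"
      using ex_S[OF assms] unfolding f_def by blast
    have "zero_subset ?V ?o S" unfolding zero_subset_def using S orn_ne0 by blast
    then show ?thesis using S by blast
  qed
  have P6: "\<forall>S. zero_subset ?V ?o S \<longrightarrow> card S \<le> 2 * k - 1"
  proof (intro allI impI)
    fix S assume "zero_subset ?V ?o S"
    then have "S \<subseteq> ?V" "\<forall>x\<in>S. \<forall>y\<in>S. \<forall>z\<in>S. distinct [x,y,z] \<longrightarrow> \<not> edge (pk k) x y z"
      unfolding zero_subset_def f_def using orn_ne0 by blast+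
    then show "card S \<le> 2*k-1" using ub[OF k] by blast
  qed
  show ?thesis using P0 P1 P2 P3 P4 P5 P6 by blast
qed

end
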